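(* Let $A$ be a real square matrix such that $A^n>0$ (all entries strictly positive) for some $n>0$. Let $\lambda$ be its Perron–Frobenius eigenvalue, and let $r>0$ satisfy $\lambda>r>|\mu|$ for every eigenvalue $\mu\neq\lambda$ of $A$. Let $v\in NonN(A)$ with $v\notin\ker(A-\lambda I)$. Then there exist $C>0$ and $N$ such that for every $n>N$ and every vector $w$ with $A^n w=v$ we have $\|w\|_1>C/r^n$.
   Context: For a square matrix $A$ acting on $\mathbb{F}^d$ ($\mathbb{F}=\mathbb{R}$ or $\mathbb{C}$), the non-nilpotent subspace $NonN(A)$ is the direct sum of the generalized eigenspaces of $A$ belonging to nonzero eigenvalues (equivalently, the eventual range $\bigcap_{n} A^n(\mathbb{F}^d)$). The Perron–Frobenius eigenvalue of a matrix with $A^n>0$ for some $n$ is its simple, real, positive eigenvalue of largest modulus. *)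

theory Defs
  imports "Jordan_Normal_Form.Matrix_Kernel" "Jordan_Normal_Form.Char_Poly"
begin

definition pos_mat :: "real mat \<Rightarrow> bool" where
  "pos_mat B \<longleftrightarrow> (\<forall>i < dim_row B. \<forall>j < dim_col B. B $$ (i,j) > 0)"

definition cplx_eigenvalue :: "real mat \<Rightarrow> complex \<Rightarrow> bool" where
  "cplx_eigenvalue A \<mu> \<longleftrightarrow> eigenvalue (map_mat complex_of_real A) \<mu>"

definition pf_eigenvalue :: "real mat \<Rightarrow> real \<Rightarrow> bool" where
  "pf_eigenvalue A l \<longleftrightarrow> l > 0 \<and> cplx_eigenvalue A (complex_of_real l)
     \<and> order (complex_of_real l) (char_poly (map_mat complex_of_real A)) = 1
     \<and> (\<forall>\<mu>. cplx_eigenvalue A \<mu> \<and> \<mu> \<noteq> complex_of_real l \<longrightarrow> cmod \<mu> < l)"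

text \<open>Non-nilpotent subspace = eventual range.\<close>
definition NonN :: "real mat \<Rightarrow> real vec set" where
  "NonN A = (\<Inter>k. {A ^\<^sub>m k *\<^sub>v x | x. x \<in> carrier_vec (dim_col A)})"

definition norm1 :: "real vec \<Rightarrow> real" where
  "norm1 w = (\<Sum>i<dim_vec w. \<bar>w $ i\<bar>)"

end

theory Submission imports Defs "Jordan_Normal_Form.Spectral_Radius" "Jordan_Normal_Form.Schur_Decomposition" begin

lemma poly_prod_root: "poly (\<Prod>a\<leftarrow>xs. [:- a, 1:]) (x::'a::idom) = 0 \<Longrightarrow> x \<in> set xs"
  by (induct xs) auto

lemma smult_pow_mat: fixes M :: "'a::comm_ring_1 mat" assumes M: "M \<in> carrier_mat n n"
  shows "(a \<cdot>\<^sub>m M) ^\<^sub>m k = a^k \<cdot>\<^sub>m (M ^\<^sub>m k)"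
proof (induct k)
  case 0
  then show ?case using M by (intro eq_matI) auto
next
  case (Suc k)
  have "(a \<cdot>\<^sub>m M) ^\<^sub>m Suc k = (a^k \<cdot>\<^sub>m (M ^\<^sub>m k)) * (a \<cdot>\<^sub>m M)" using Suc by simp
  also have "\<dots> = a^k \<cdot>\<^sub>m ((M ^\<^sub>m k) * (a \<cdot>\<^sub>m M))"
    using mult_smult_assoc_mat[of "M ^\<^sub>m k" n n "a \<cdot>\<^sub>m M" n "a^k"] M by simp
  also have "\<dots> = a^k \<cdot>\<^sub>m (a \<cdot>\<^sub>m (M ^\<^sub>m k * M))"
    using mult_smult_distrib[of "M ^\<^sub>m k" n n M n a] M by simp
  also have "\<dots> = a^Suc k \<cdot>\<^sub>m (M ^\<^sub>m Suc k)" using M by (intro eq_matI) auto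
  finally show ?case .
qed

lemma pow_mat_Suc': assumes M: "M \<in> carrier_mat n n"
  shows "M ^\<^sub>m Suc k = M * M ^\<^sub>m k"
proof (induct k)
  case 0 then show ?case using M by simp
next
  case (Suc k)
  have "M ^\<^sub>m Suc (Suc k) = (M * M ^\<^sub>m k) * M" using Suc by simp
  also have "\<dots> = M * (M ^\<^sub>m k * M)" using M by (intro assoc_mult_mat) auto
  finally show ?case by simp
qed

lemma upper_tri_bound:
  fixes D :: "complex mat"
  assumes D: "D \<in> carrier_mat n n" and ut: "upper_triangular D" and n: "n > 0" and r: "r > 0"
    and diag: "\<forall>i<n. cmod (D $$ (i,i)) < r"
  shows "\<exists>c. \<forall>k i j. i < n \<longrightarrow> j < n \<longrightarrow> cmod ((D ^\<^sub>m k) $$ (i,j)) \<le> c * r^k"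
proof -
  define D' where "D' = (1 / complex_of_real r) \<cdot>\<^sub>m D"
  have D'c: "D' \<in> carrier_mat n n" using D by (simp add: D'_def)
  have ut': "upper_triangular D'" using ut D unfolding D'_def upper_triangular_def by auto
  have "spectral_radius D' \<in> norm ` spectrum D'" by (rule spectral_radius_mem_max(1)[OF D'c n])
  then obtain ev where ev: "ev \<in> spectrum D'" and sr: "spectral_radius D' = norm ev" by auto
  from ev have "poly (char_poly D') ev = 0"
    unfolding spectrum_def using eigenvalue_root_char_poly[OF D'c] by auto
  hence "ev \<in> set (diag_mat D')" unfolding char_poly_upper_triangular[OF D'c ut']
    by (rule poly_prod_root)
  then obtain i where i: "i < n" and evi: "ev = D' $$ (i,i)" using D'c unfolding diag_mat_def by auto
  have "norm ev = cmod (D $$ (i,i)) / r" using i D r unfolding evi D'_def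
    by (simp add: norm_divide)
  also have "\<dots> < 1" using diag i r by simp
  finally have "spectral_radius D' < 1" using sr by simp
  from spectral_radius_jnf_norm_bound_less_1_upper_triangular[OF D'c this]
  obtain c where c: "\<And>k. norm_bound (D' ^\<^sub>m k) c" by auto
  have DD: "D = complex_of_real r \<cdot>\<^sub>m D'" using D r unfolding D'_def by (intro eq_matI) auto
  show ?thesis
  proof (intro exI allI impI)
    fix k i j assume ij: "i < n" "j < n"
    have "(D ^\<^sub>m k) $$ (i,j) = (complex_of_real r)^k * (D' ^\<^sub>m k) $$ (i,j)"
      unfolding DD smult_pow_mat[OF D'c] using ij D'c by simp
    hence "cmod ((D ^\<^sub>m k) $$ (i,j)) = r^k * cmod ((D' ^\<^sub>m k) $$ (i,j))"
      using r by (simp add: norm_mult norm_power)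
    also have "\<dots> \<le> r^k * c" using c[of k] ij D'c r unfolding norm_bound_def
      by (intro mult_left_mono) auto
    finally show "cmod ((D ^\<^sub>m k) $$ (i,j)) \<le> c * r^k" by (simp add: mult.commute)
  qed
qed


lemma poly_prod_root2: "(x::'a::idom) \<in> set xs \<Longrightarrow> poly (\<Prod>a\<leftarrow>xs. [:- a, 1:]) x = 0"
  by (induct xs) auto

lemma smult_one_mult_vec: assumes "v \<in> carrier_vec n"
  shows "((l::'a::comm_ring_1) \<cdot>\<^sub>m 1\<^sub>m n) *\<^sub>v v = l \<cdot>\<^sub>v v"
proof (rule eq_vecI)
  fix i assume i: "i < dim_vec (l \<cdot>\<^sub>v v)"
  hence i': "i < n" using assms by auto
  have "((l \<cdot>\<^sub>m 1\<^sub>m n) *\<^sub>v v) $ i = (\<Sum>j<n. (if i = j then l else 0) * v $ j)"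
    using i' assms by (auto simp: scalar_prod_def lessThan_atLeast0 intro!: sum.cong)
  also have "\<dots> = (\<Sum>j<n. if i = j then l * v $ j else 0)" by (intro sum.cong) auto
  also have "\<dots> = l * v $ i" using i' by (simp add: sum.delta)
  finally show "((l \<cdot>\<^sub>m 1\<^sub>m n) *\<^sub>v v) $ i = (l \<cdot>\<^sub>v v) $ i" using i' assms by simp
qed (use assms in auto)

theorem fact2p1:
  fixes A :: "real mat" and d :: nat and l r :: real and v :: "real vec"
  assumes "A \<in> carrier_mat d d"
    and "\<exists>n>0. pos_mat (A ^\<^sub>m n)"
    and "pf_eigenvalue A l"
    and "0 < r" and "r < l"
    and "\<forall>\<mu>. cplx_eigenvalue A \<mu> \<and> \<mu> \<noteq> complex_of_real l \<longrightarrow> cmod \<mu> < r"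
    and "v \<in> NonN A"
    and "v \<notin> mat_kernel (A - l \<cdot>\<^sub>m 1\<^sub>m d)"
  shows "\<exists>C>0. \<exists>N::nat. \<forall>n>N. \<forall>w \<in> carrier_vec d.
           A ^\<^sub>m n *\<^sub>v w = v \<longrightarrow> norm1 w > C / r ^ n"
proof -
  note A = assms(1)
  note r = assms(4)
  note pf = assms(3)[unfolded pf_eigenvalue_def]
  note small = assms(6)
  have vc: "v \<in> carrier_vec d"
  proof -
    from assms(7) obtain x where "x \<in> carrier_vec (dim_col A)" "v = A ^\<^sub>m 0 *\<^sub>v x"
      unfolding NonN_def by blast
    thus ?thesis using A by auto
  qed
  have Av: "A *\<^sub>v v \<noteq> l \<cdot>\<^sub>v v"
  proof
    assume eq: "A *\<^sub>v v = l \<cdot>\<^sub>v v"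
    have "(A - l \<cdot>\<^sub>m 1\<^sub>m d) *\<^sub>v v = A *\<^sub>v v - l \<cdot>\<^sub>v v"
      using A vc by (simp add: minus_mult_distrib_mat_vec smult_one_mult_vec)
    also have "\<dots> = 0\<^sub>v d" using eq vc by auto
    finally have "v \<in> mat_kernel (A - l \<cdot>\<^sub>m 1\<^sub>m d)" using A vc unfolding mat_kernel_def by auto
    with assms(8) show False by auto
  qed
  have d0: "d > 0"
  proof (rule ccontr)
    assume "\<not> d > 0" hence "d = 0" by auto
    hence "A *\<^sub>v v = l \<cdot>\<^sub>v v" using A vc by (intro eq_vecI) auto
    with Av show False by auto
  qed
  define Ac where "Ac = map_mat complex_of_real A"
  have Acc: "Ac \<in> carrier_mat d d" using A unfolding Ac_def by auto
  define lc where "lc = complex_of_real l"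
  obtain as where cp: "char_poly Ac = (\<Prod>a\<leftarrow>as. [:-a,1:])"
    using char_poly_factorized[OF Acc] by auto
  have "poly (char_poly Ac) lc = 0" using pf eigenvalue_root_char_poly[OF Acc]
    unfolding cplx_eigenvalue_def Ac_def lc_def by auto
  hence las: "lc \<in> set as" unfolding cp by (rule poly_prod_root)
  define es where "es = lc # remove1 lc as"
  have cp2: "char_poly Ac = (\<Prod>a\<leftarrow>es. [:-a,1:])"
    unfolding cp es_def list.map(2) prod_list.Cons by (rule prod_list_map_remove1[OF las])
  have cp0: "char_poly Ac \<noteq> 0" using degree_monic_char_poly[OF Acc] by auto
  have notin: "lc \<notin> set (remove1 lc as)"
  proof
    assume h: "lc \<in> set (remove1 lc as)"
    have "char_poly Ac = [:-lc,1:] * ([:-lc,1:] * (\<Prod>a\<leftarrow>remove1 lc (remove1 lc as). [:-a,1:]))"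
      unfolding cp2 es_def list.map(2) prod_list.Cons by (simp only: prod_list_map_remove1[OF h])
    hence "[:-lc,1:]^2 dvd char_poly Ac" by (metis dvd_triv_left mult.assoc power2_eq_square)
    from order_max[OF this cp0] pf show False unfolding Ac_def lc_def by simp
  qed
  have small_es: "cmod e < r" if e: "e \<in> set (remove1 lc as)" for e
  proof -
    have e1: "e \<in> set as" using e by (meson notin_set_remove1)
    have e2: "e \<noteq> lc" using e notin by auto
    have "poly (char_poly Ac) e = 0" unfolding cp using e1 by (rule poly_prod_root2)
    hence "cplx_eigenvalue A e" using eigenvalue_root_char_poly[OF Acc]
      unfolding cplx_eigenvalue_def Ac_def by auto
    thus ?thesis using small e2 unfolding lc_def by auto
  qed
  obtain T P Q where sch: "schur_decomposition Ac es = (T,P,Q)" by (cases "schur_decomposition Ac es") auto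
  from schur_decomposition[OF Acc cp2 sch]
  have sim: "similar_mat_wit Ac T P Q" and utT: "upper_triangular T" and diagT: "diag_mat T = es"
    by auto
  note simD = similar_mat_witD2[OF Acc sim]
  have Tc: "T \<in> carrier_mat d d" and Pc: "P \<in> carrier_mat d d" and Qc: "Q \<in> carrier_mat d d"
    and PQ: "P * Q = 1\<^sub>m d" and QP: "Q * P = 1\<^sub>m d" and AcPTQ: "Ac = P * T * Q" using simD by auto
  have lenes: "length es = d" using diagT[symmetric] Tc unfolding diag_mat_def by simp
  have Tii: "T $$ (i,i) = es ! i" if "i < d" for i
    using diagT[symmetric] Tc that unfolding diag_mat_def by simp
  have T00: "T $$ (0,0) = lc" using Tii[OF d0] unfolding es_def by simp
  have Tsmall: "cmod (T $$ (i,i)) < r" if "i < d" "i \<noteq> 0" for i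
  proof -
    have "T $$ (i,i) = remove1 lc as ! (i - 1)" using Tii[OF that(1)] that(2) unfolding es_def
      by (cases i) auto
    moreover have "i - 1 < length (remove1 lc as)" using lenes that unfolding es_def by auto
    ultimately show ?thesis using small_es by auto
  qed
  have Tlow: "T $$ (i,j) = 0" if "i < d" "j < i" for i j using utT Tc that by auto
  define E where "E = mat d d (\<lambda>(i,j). if i = j \<and> i \<noteq> 0 then (1::complex) else 0)"
  define D where "D = mat d d (\<lambda>(i,j). if i = 0 then 0 else T $$ (i,j))"
  have Ec: "E \<in> carrier_mat d d" and Dc: "D \<in> carrier_mat d d" unfolding E_def D_def by auto
  have DET: "D = E * T"
  proof (rule eq_matI)
    fix i j assume ij: "i < dim_row (E * T)" "j < dim_col (E * T)"
    hence ij': "i < d" "j < d" using Ec Tc by auto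
    have "(E * T) $$ (i,j) = (\<Sum>k<d. (if k = i \<and> i \<noteq> 0 then 1 else 0) * T $$ (k,j))"
      using ij' Ec Tc unfolding E_def
      by (auto simp: scalar_prod_def lessThan_atLeast0 intro!: sum.cong)
    also have "\<dots> = (\<Sum>k<d. if k = i then (if i \<noteq> 0 then T $$ (k,j) else 0) else 0)"
      by (intro sum.cong) auto
    also have "\<dots> = D $$ (i,j)" using ij' unfolding D_def by (simp add: sum.delta')
    finally show "D $$ (i,j) = (E * T) $$ (i,j)" by simp
  qed (use Ec Tc Dc in auto)
  have ETE: "D * E = D"
  proof (rule eq_matI)
    fix i j assume ij: "i < dim_row D" "j < dim_col D"
    hence ij': "i < d" "j < d" using Dc by auto
    have "(D * E) $$ (i,j) = (\<Sum>k<d. D $$ (i,k) * (if j = k \<and> j \<noteq> 0 then 1 else 0))"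
      using ij' Ec Dc unfolding E_def
      by (auto simp: scalar_prod_def lessThan_atLeast0 intro!: sum.cong)
    also have "\<dots> = (\<Sum>k<d. if k = j then (if j \<noteq> 0 then D $$ (i,k) else 0) else 0)"
      by (intro sum.cong) auto
    also have "\<dots> = D $$ (i,j)" using ij' Tlow[of i 0] unfolding D_def by (auto simp: sum.delta')
    finally show "(D * E) $$ (i,j) = D $$ (i,j)" by simp
  qed (use Ec Dc in auto)
  have Dpow: "D ^\<^sub>m Suc k = E * T ^\<^sub>m Suc k" for k
  proof (induct k)
    case 0 then show ?case using DET Dc by simp
  next
    case (Suc k)
    have "D ^\<^sub>m Suc (Suc k) = D * D ^\<^sub>m Suc k" by (rule pow_mat_Suc'[OF Dc])
    also have "\<dots> = D * (E * T ^\<^sub>m Suc k)" using Suc by simp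
    also have "\<dots> = (D * E) * T ^\<^sub>m Suc k" by (rule assoc_mult_mat[symmetric, OF Dc Ec pow_carrier_mat[OF Tc]])
    also have "\<dots> = D * T ^\<^sub>m Suc k" unfolding ETE ..
    also have "\<dots> = E * (T * T ^\<^sub>m Suc k)" unfolding DET by (rule assoc_mult_mat[OF Ec Tc pow_carrier_mat[OF Tc]])
    also have "T * T ^\<^sub>m Suc k = T ^\<^sub>m Suc (Suc k)" by (rule pow_mat_Suc'[OF Tc, symmetric])
    finally show ?case .
  qed
  have utD: "upper_triangular D" using Tlow Dc unfolding D_def upper_triangular_def by auto
  have Dsmall: "\<forall>i<d. cmod (D $$ (i,i)) < r" using Tsmall r unfolding D_def by auto
  obtain c where c: "\<And>k i j. i < d \<Longrightarrow> j < d \<Longrightarrow> cmod ((D ^\<^sub>m k) $$ (i,j)) \<le> c * r^k"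
    using upper_tri_bound[OF Dc utD d0 r Dsmall] by blast
  define vc' where "vc' = map_vec complex_of_real v"
  define v' where "v' = Q *\<^sub>v vc'"
  define u where "u = E *\<^sub>v v'"
  have vc'c: "vc' \<in> carrier_vec d" using vc unfolding vc'_def by auto
  have v'c: "v' \<in> carrier_vec d" using Qc vc'c unfolding v'_def by auto
  have uc: "u \<in> carrier_vec d" using Ec v'c unfolding u_def by auto
  have u_ne: "u \<noteq> 0\<^sub>v d"
  proof
    assume u0: "u = 0\<^sub>v d"
    have v'0: "v' $ i = 0" if "i < d" "i \<noteq> 0" for i
    proof -
      have "u $ i = (\<Sum>k<d. (if i = k \<and> i \<noteq> 0 then 1 else 0) * v' $ k)"
        using that Ec v'c unfolding u_def E_def
        by (auto simp: scalar_prod_def lessThan_atLeast0 intro!: sum.cong)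
      also have "\<dots> = (\<Sum>k<d. if k = i then v' $ k else 0)" using that by (intro sum.cong) auto
      also have "\<dots> = v' $ i" using that by (simp add: sum.delta')
      finally show ?thesis using u0 that by simp
    qed
    have Tv': "T *\<^sub>v v' = lc \<cdot>\<^sub>v v'"
    proof (rule eq_vecI)
      fix i assume "i < dim_vec (lc \<cdot>\<^sub>v v')"
      hence i: "i < d" using v'c by auto
      have "(T *\<^sub>v v') $ i = (\<Sum>k<d. T $$ (i,k) * v' $ k)"
        using i Tc v'c by (auto simp: scalar_prod_def lessThan_atLeast0 intro!: sum.cong)
      also have "\<dots> = (\<Sum>k<d. if k = 0 then T $$ (i,k) * v' $ k else 0)"
        using v'0 by (intro sum.cong) auto
      also have "\<dots> = T $$ (i,0) * v' $ 0" using d0 by (simp add: sum.delta')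
      also have "\<dots> = lc * v' $ i" using T00 Tlow[of i 0] v'0[of i] i by (cases "i = 0") auto
      finally show "(T *\<^sub>v v') $ i = (lc \<cdot>\<^sub>v v') $ i" using i v'c by simp
    qed (use v'c Tc in auto)
    have vPv: "vc' = P *\<^sub>v v'"
      unfolding v'_def using assoc_mult_mat_vec[OF Pc Qc vc'c] PQ vc'c by simp
    have "Ac *\<^sub>v vc' = P *\<^sub>v (T *\<^sub>v (Q *\<^sub>v (P *\<^sub>v v')))"
      unfolding AcPTQ vPv
      using assoc_mult_mat_vec[OF mult_carrier_mat[OF Pc Tc] Qc, of "P *\<^sub>v v'"]
        assoc_mult_mat_vec[OF Pc Tc, of "Q *\<^sub>v (P *\<^sub>v v')"] Pc Tc Qc v'c
      by simp
    also have "Q *\<^sub>v (P *\<^sub>v v') = v'"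
      using assoc_mult_mat_vec[OF Qc Pc v'c] QP v'c by simp
    also have "P *\<^sub>v (T *\<^sub>v v') = lc \<cdot>\<^sub>v vc'"
      unfolding Tv' vPv using Pc v'c by (simp add: mult_mat_vec)
    finally have "Ac *\<^sub>v vc' = lc \<cdot>\<^sub>v vc'" .
    hence "map_vec complex_of_real (A *\<^sub>v v) = map_vec complex_of_real (l \<cdot>\<^sub>v v)"
      unfolding Ac_def vc'_def lc_def
      using of_real_hom.mult_mat_vec_hom[OF A vc] of_real_hom.vec_hom_smult[of l v] by metis
    hence "A *\<^sub>v v = l \<cdot>\<^sub>v v" by (rule of_real_hom.vec_hom_inj)
    with Av show False by simp
  qed
  then obtain i0 where i0: "i0 < d" and ui0: "u $ i0 \<noteq> 0" using uc by (auto simp: vec_eq_iff)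
  define \<delta> where "\<delta> = cmod (u $ i0)"
  have \<delta>0: "\<delta> > 0" using ui0 unfolding \<delta>_def by simp
  define M where "M = (\<Sum>j<d. \<Sum>m<d. cmod (Q $$ (j,m)))"
  define c' where "c' = max c 0"
  define K where "K = real d * c' * M + 1"
  have M0: "M \<ge> 0" unfolding M_def by (intro sum_nonneg) auto
  have c'0: "c' \<ge> 0" unfolding c'_def by simp
  have K0: "K > 0" unfolding K_def using M0 c'0
    by (metis add_pos_nonneg less_numeral_extra(1) mult_nonneg_nonneg of_nat_0_le_iff add.commute)
  have QM: "cmod (Q $$ (j,m)) \<le> M" if "j < d" "m < d" for j m
  proof -
    have "cmod (Q $$ (j,m)) \<le> (\<Sum>m'<d. cmod (Q $$ (j,m')))"
      using that by (intro member_le_sum) auto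
    also have "\<dots> \<le> M" unfolding M_def using that
      by (intro member_le_sum[of j _ "\<lambda>j. \<Sum>m<d. cmod (Q $$ (j,m))"]) (auto intro: sum_nonneg)
    finally show ?thesis .
  qed
  have mv: "(X *\<^sub>v x) $ i = (\<Sum>j<d. X $$ (i,j) * x $ j)"
    if "X \<in> carrier_mat d d" "x \<in> carrier_vec d" "i < d" for X :: "complex mat" and x i
    using that by (auto simp: scalar_prod_def lessThan_atLeast0 intro!: sum.cong)
  have key: "\<delta> \<le> K * r ^ Suc k * norm1 w"
    if w: "w \<in> carrier_vec d" and eq: "A ^\<^sub>m Suc k *\<^sub>v w = v" for k w
  proof -
    define wc where "wc = map_vec complex_of_real w"
    define w' where "w' = Q *\<^sub>v wc"
    have wcc: "wc \<in> carrier_vec d" using w unfolding wc_def by auto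
    have w'c: "w' \<in> carrier_vec d" using Qc wcc unfolding w'_def by auto
    have TSc: "T ^\<^sub>m Suc k \<in> carrier_mat d d" using pow_carrier_mat[OF Tc] .
    have "Ac ^\<^sub>m Suc k *\<^sub>v wc = vc'"
      using of_real_hom.mult_mat_vec_hom[OF pow_carrier_mat[OF A] w, of "Suc k"]
        of_real_hom.mat_hom_pow[OF A, of "Suc k"] eq
      unfolding Ac_def wc_def vc'_def by metis
    hence "(P * T ^\<^sub>m Suc k * Q) *\<^sub>v wc = vc'" using similar_mat_wit_pow_id[OF sim] by metis
    hence "P *\<^sub>v (T ^\<^sub>m Suc k *\<^sub>v w') = vc'" unfolding w'_def
      using assoc_mult_mat_vec[OF mult_carrier_mat[OF Pc TSc] Qc wcc]
        assoc_mult_mat_vec[OF Pc TSc, of "Q *\<^sub>v wc"] Qc wcc by simp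
    hence "Q *\<^sub>v (P *\<^sub>v (T ^\<^sub>m Suc k *\<^sub>v w')) = v'" unfolding v'_def by simp
    hence Tw: "T ^\<^sub>m Suc k *\<^sub>v w' = v'"
      using assoc_mult_mat_vec[OF Qc Pc, of "T ^\<^sub>m Suc k *\<^sub>v w'"] QP TSc w'c by simp
    have Dw: "D ^\<^sub>m Suc k *\<^sub>v w' = u"
      unfolding Dpow u_def Tw[symmetric] using assoc_mult_mat_vec[OF Ec TSc w'c] .
    have DSc: "D ^\<^sub>m Suc k \<in> carrier_mat d d" using pow_carrier_mat[OF Dc] .
    have w'b: "cmod (w' $ j) \<le> M * norm1 w" if j: "j < d" for j
    proof -
      have "w' $ j = (\<Sum>m<d. Q $$ (j,m) * complex_of_real (w $ m))"
        using j Qc w unfolding w'_def wc_def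
        by (auto simp: scalar_prod_def lessThan_atLeast0 intro!: sum.cong)
      hence "cmod (w' $ j) \<le> (\<Sum>m<d. cmod (Q $$ (j,m)) * \<bar>w $ m\<bar>)"
        by (metis (no_types, lifting) norm_mult norm_of_real norm_sum sum.cong)
      also have "\<dots> \<le> (\<Sum>m<d. M * \<bar>w $ m\<bar>)"
        using QM j by (intro sum_mono mult_right_mono) auto
      also have "\<dots> = M * norm1 w" using w unfolding norm1_def by (simp add: sum_distrib_left)
      finally show ?thesis .
    qed
    have "u $ i0 = (\<Sum>j<d. (D ^\<^sub>m Suc k) $$ (i0,j) * w' $ j)"
      unfolding Dw[symmetric] by (rule mv[OF DSc w'c i0])
    hence "\<delta> \<le> (\<Sum>j<d. cmod ((D ^\<^sub>m Suc k) $$ (i0,j)) * cmod (w' $ j))"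
      unfolding \<delta>_def by (metis (no_types, lifting) norm_mult norm_sum sum.cong)
    also have "\<dots> \<le> (\<Sum>j<d. (c' * r ^ Suc k) * (M * norm1 w))"
    proof (intro sum_mono mult_mono)
      fix j assume j: "j \<in> {..<d}"
      show "cmod ((D ^\<^sub>m Suc k) $$ (i0,j)) \<le> c' * r ^ Suc k"
        using c[OF i0, of j "Suc k"] j r unfolding c'_def
        by (smt (verit, ccfv_SIG) lessThan_iff max.cobounded1 mult_right_mono zero_less_power)
      show "cmod (w' $ j) \<le> M * norm1 w" using w'b j by auto
      show "0 \<le> c' * r ^ Suc k" using c'0 r by simp
    qed auto
    also have "\<dots> = real d * c' * M * r ^ Suc k * norm1 w" by (simp add: algebra_simps)
    also have "\<dots> \<le> K * r ^ Suc k * norm1 w"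
    proof -
      have n1: "norm1 w \<ge> 0" unfolding norm1_def by (intro sum_nonneg) auto
      have "real d * c' * M \<le> K" unfolding K_def by simp
      thus ?thesis using n1 r by (intro mult_right_mono) auto
    qed
    finally show ?thesis .
  qed
  show ?thesis
  proof (intro exI[of _ "\<delta> / (2 * K)"] conjI exI[of _ "0::nat"] allI impI ballI)
    show "\<delta> / (2 * K) > 0" using \<delta>0 K0 by simp
    fix n w assume n: "n > 0" and w: "w \<in> carrier_vec d" and eq: "A ^\<^sub>m n *\<^sub>v w = v"
    obtain k where nk: "n = Suc k" using n by (cases n) auto
    have kb: "\<delta> \<le> K * r ^ n * norm1 w" using key[OF w eq[unfolded nk]] nk by simp
    have rn: "r ^ n > 0" using r by simp
    have "\<delta> / (2 * K) / r ^ n = \<delta> / (2 * K * r ^ n)" by simp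
    also have "\<dots> < norm1 w"
    proof -
      have "0 < K * r ^ n * norm1 w" using kb \<delta>0 by linarith
      hence "\<delta> < 2 * K * r ^ n * norm1 w" using kb by linarith
      thus ?thesis using K0 rn by (simp add: pos_divide_less_eq mult.commute mult.left_commute)
    qed
    finally show "\<delta> / (2 * K) / r ^ n < norm1 w" .
  qed
qed
end
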